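(* Let $G=G(n_1,n_2,p)$ where $1\ll n_1=\lambda n_2$ for a constant $0<\lambda\leq1$, and $p=\frac{d}{\sqrt{n_1n_2}}$ for a constant $d>1$. Then whp the number of small balanced unicyclic components of $G$ is $o(\log^5 n_1)$.
   Context: $G(n_1,n_2,p)$ is the binomial random bipartite graph with partition classes $N_1,N_2$ of sizes $n_1,n_2$, each edge between them present independently with probability $p$. For $p=\frac{d}{\sqrt{n_1n_2}}$ with $d>1$, there exist positive constants $\beta_0,\beta_1$ (from a result of Johansson) such that whp at most one component of $G$ meets $N_1$ in more than $\beta_1\sqrt{n_1\log n_1}$ vertices and no component meets $N_1$ in $k$ vertices with $k\in[\beta_0\log^2 n_1,\beta_1\sqrt{n_1\log n_1}]$; fix such $\beta_0$. A component $C$ is small if $|C\cap N_1|\leq\beta_0\log^2 n_1$, and balanced if $|C\cap N_2|\leq 2pn_2|C\cap N_1|$. A component is unicyclic if it contains exactly one cycle. $\log$ is the natural logarithm; "whp" means with probability tending to $1$ as $n_1\to\infty$. *)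

theory Defs
  imports "HOL-Probability.Probability" "HOL-Library.Landau_Symbols"
begin

text \<open>Vertices: Inl i (i < n1) form N1,
  Inr j (j < n2) form N2. A graph is given by its edge indicator on pairs (i,j) in N1 x N2;
  each such pair is an edge independently with probability p.\<close>

definition bip_random :: "nat \<Rightarrow> nat \<Rightarrow> real \<Rightarrow> (nat \<times> nat \<Rightarrow> bool) pmf" where
  "bip_random n1 n2 p = Pi_pmf ({..<n1} \<times> {..<n2}) False (\<lambda>_. bernoulli_pmf p)"

definition bip_V :: "nat \<Rightarrow> nat \<Rightarrow> (nat + nat) set" where
  "bip_V n1 n2 = Inl ` {..<n1} \<union> Inr ` {..<n2}"

definition N1_part :: "(nat + nat) set \<Rightarrow> (nat + nat) set" where
  "N1_part C = C \<inter> range Inl"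

definition N2_part :: "(nat + nat) set \<Rightarrow> (nat + nat) set" where
  "N2_part C = C \<inter> range Inr"

definition edge_adj :: "(nat \<times> nat) set \<Rightarrow> nat + nat \<Rightarrow> nat + nat \<Rightarrow> bool" where
  "edge_adj S u v = (\<exists>i j. (i, j) \<in> S \<and> ((u = Inl i \<and> v = Inr j) \<or> (u = Inr j \<and> v = Inl i)))"

definition bip_edges :: "nat \<Rightarrow> nat \<Rightarrow> (nat \<times> nat \<Rightarrow> bool) \<Rightarrow> (nat \<times> nat) set" where
  "bip_edges n1 n2 G = {(i, j). i < n1 \<and> j < n2 \<and> G (i, j)}"

definition bip_components :: "nat \<Rightarrow> nat \<Rightarrow> (nat \<times> nat \<Rightarrow> bool) \<Rightarrow> (nat + nat) set set" where
  "bip_components n1 n2 G =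
     {C. \<exists>u \<in> bip_V n1 n2. C = {v \<in> bip_V n1 n2. (edge_adj (bip_edges n1 n2 G))\<^sup>*\<^sup>* u v}}"

definition edge_verts :: "(nat \<times> nat) set \<Rightarrow> (nat + nat) set" where
  "edge_verts S = Inl ` fst ` S \<union> Inr ` snd ` S"

definition edge_deg :: "(nat \<times> nat) set \<Rightarrow> nat + nat \<Rightarrow> nat" where
  "edge_deg S v = (case v of Inl i \<Rightarrow> card {j. (i, j) \<in> S} | Inr j \<Rightarrow> card {i. (i, j) \<in> S})"

definition is_cycle :: "(nat \<times> nat) set \<Rightarrow> bool" where
  "is_cycle S = (S \<noteq> {} \<and> finite S \<and> (\<forall>v \<in> edge_verts S. edge_deg S v = 2) \<and>
     (\<forall>u \<in> edge_verts S. \<forall>v \<in> edge_verts S. (edge_adj S)\<^sup>*\<^sup>* u v))"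

definition comp_edges :: "nat \<Rightarrow> nat \<Rightarrow> (nat \<times> nat \<Rightarrow> bool) \<Rightarrow> (nat + nat) set \<Rightarrow> (nat \<times> nat) set" where
  "comp_edges n1 n2 G C = {(i, j) \<in> bip_edges n1 n2 G. Inl i \<in> C}"

definition unicyclic :: "nat \<Rightarrow> nat \<Rightarrow> (nat \<times> nat \<Rightarrow> bool) \<Rightarrow> (nat + nat) set \<Rightarrow> bool" where
  "unicyclic n1 n2 G C = (card {S. S \<subseteq> comp_edges n1 n2 G C \<and> is_cycle S} = 1)"

definition small_comp :: "real \<Rightarrow> nat \<Rightarrow> (nat + nat) set \<Rightarrow> bool" where
  "small_comp \<beta>0 n1 C = (real (card (N1_part C)) \<le> \<beta>0 * (ln (real n1))\<^sup>2)"

definition balanced_comp :: "real \<Rightarrow> nat \<Rightarrow> (nat + nat) set \<Rightarrow> bool" where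
  "balanced_comp p n2 C = (real (card (N2_part C)) \<le> 2 * p * real n2 * real (card (N1_part C)))"

definition num_sbu :: "real \<Rightarrow> real \<Rightarrow> nat \<Rightarrow> nat \<Rightarrow> (nat \<times> nat \<Rightarrow> bool) \<Rightarrow> nat" where
  "num_sbu \<beta>0 p n1 n2 G = card {C \<in> bip_components n1 n2 G.
      small_comp \<beta>0 n1 C \<and> balanced_comp p n2 C \<and> unicyclic n1 n2 G C}"

definition johansson_event :: "real \<Rightarrow> real \<Rightarrow> nat \<Rightarrow> nat \<Rightarrow> (nat \<times> nat \<Rightarrow> bool) \<Rightarrow> bool" where
  "johansson_event \<beta>0 \<beta>1 n1 n2 G =
     (card {C \<in> bip_components n1 n2 G.
        real (card (N1_part C)) > \<beta>1 * sqrt (real n1 * ln (real n1))} \<le> 1 \<and>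
      (\<forall>C \<in> bip_components n1 n2 G.
        \<not> (\<beta>0 * (ln (real n1))\<^sup>2 \<le> real (card (N1_part C)) \<and>
           real (card (N1_part C)) \<le> \<beta>1 * sqrt (real n1 * ln (real n1)))))"

end

theory Submission
  imports Defs "HOL-Real_Asymp.Real_Asymp"
begin

definition opp :: "nat + nat \<Rightarrow> nat + nat \<Rightarrow> bool" where
  "opp x y = ((\<exists>i j. x = Inl i \<and> y = Inr j) \<or> (\<exists>i j. x = Inr j \<and> y = Inl i))"

fun toE :: "nat + nat \<Rightarrow> nat + nat \<Rightarrow> nat \<times> nat" where
  "toE (Inl i) (Inr j) = (i, j)"
| "toE (Inr j) (Inl i) = (i, j)"
| "toE _ _ = (0, 0)"

lemma edge_adj_iff: "edge_adj S x y \<longleftrightarrow> opp x y \<and> toE x y \<in> S"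
  by (cases x; cases y) (auto simp: edge_adj_def opp_def)

lemma opp_sym: "opp x y \<Longrightarrow> opp y x"
  by (auto simp: opp_def)

lemma toE_sym: "toE x y = toE y x"
  by (cases x; cases y) auto

lemma edge_adj_sym: "edge_adj S x y \<Longrightarrow> edge_adj S y x"
  by (auto simp: edge_adj_iff opp_sym toE_sym)

lemma toE_eq: "opp x y \<Longrightarrow> opp x' y' \<Longrightarrow> toE x y = toE x' y' \<Longrightarrow>
   (x = x' \<and> y = y') \<or> (x = y' \<and> y = x')"
  by (auto simp: opp_def)

lemma edge_deg_card: "edge_deg S v = card {w. edge_adj S v w}"
proof (cases v)
  case (Inl i)
  have "{w. edge_adj S v w} = Inr ` {j. (i, j) \<in> S}"
    using Inl by (auto simp: edge_adj_def)
  then show ?thesis using Inl by (simp add: edge_deg_def card_image)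
next
  case (Inr j)
  have "{w. edge_adj S v w} = Inl ` {i. (i, j) \<in> S}"
    using Inr by (auto simp: edge_adj_def)
  then show ?thesis using Inr by (simp add: edge_deg_def card_image)
qed

lemma edge_adj_verts: "edge_adj S v w \<Longrightarrow> w \<in> edge_verts S"
  by (auto simp: edge_adj_def edge_verts_def image_iff; force)

lemma bfs_tree:
  assumes r: "r \<in> C" and closed: "\<And>x y. x \<in> C \<Longrightarrow> R x y \<Longrightarrow> y \<in> C"
    and conn: "\<And>y. y \<in> C \<Longrightarrow> R\<^sup>*\<^sup>* r y"
  shows "\<exists>par dep. \<forall>v\<in>C-{r}. R (par v) v \<and> par v \<in> C \<and> Suc (dep (par v)) = dep (v::'a)"
proof -
  define dep where "dep v = (LEAST n. (R ^^ n) r v)" for v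
  have reachC: "(R ^^ n) r w \<Longrightarrow> w \<in> C" for n w
  proof (induction n arbitrary: w)
    case 0 then show ?case using r by simp
  next
    case (Suc n)
    then obtain y where "(R ^^ n) r y" "R y w" by (auto elim: relpowp_Suc_E)
    then show ?case using Suc closed by blast
  qed
  have "\<exists>w. R w v \<and> w \<in> C \<and> Suc (dep w) = dep v" if v: "v \<in> C - {r}" for v
  proof -
    obtain n where "(R ^^ n) r v" using conn v by (auto simp: rtranclp_power)
    then have dv: "(R ^^ dep v) r v" unfolding dep_def by (rule LeastI)
    have "dep v \<noteq> 0" using dv v by (cases "dep v") auto
    then obtain k where k: "dep v = Suc k" by (cases "dep v") auto
    with dv obtain w where w: "(R ^^ k) r w" "R w v" by (auto elim: relpowp_Suc_E)
    have "dep w \<le> k" unfolding dep_def using w(1) by (rule Least_le)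
    moreover have "(R ^^ Suc (dep w)) r v"
    proof -
      have "(R ^^ dep w) r w" unfolding dep_def using w(1) by (rule LeastI)
      then show ?thesis using w(2) by auto
    qed
    then have "dep v \<le> Suc (dep w)" unfolding dep_def by (rule Least_le)
    ultimately have "Suc (dep w) = dep v" using k by simp
    then show ?thesis using w reachC by blast
  qed
  then obtain par where "\<forall>v\<in>C-{r}. R (par v) v \<and> par v \<in> C \<and> Suc (dep (par v)) = dep v"
    by metis
  then show ?thesis by blast
qed

lemma tree_inj:
  assumes tree: "\<forall>v\<in>C-{r}. opp (par v) v \<and> par v \<in> C \<and> Suc (dep (par v)) = (dep v::nat)"
  shows "inj_on (\<lambda>v. toE v (par v)) (C - {r})"
proof (rule inj_onI)
  fix u v assume u: "u \<in> C - {r}" and v: "v \<in> C - {r}" and eq: "toE u (par u) = toE v (par v)"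
  have "opp u (par u)" "opp v (par v)" using tree u v opp_sym by auto
  from toE_eq[OF this eq] have "(u = v \<and> par u = par v) \<or> (u = par v \<and> par u = v)" .
  then show "u = v"
  proof
    assume h: "u = par v \<and> par u = v"
    have "Suc (dep (par v)) = dep v" "Suc (dep (par u)) = dep u" using tree u v by auto
    then have "Suc (dep u) = dep v" "Suc (dep v) = dep u" using h by auto
    then show ?thesis by simp
  qed simp
qed

lemma tree_cycle:
  assumes tree: "\<forall>v\<in>C-{r}. opp (par v) v \<and> par v \<in> C \<and> Suc (dep (par v)) = (dep v::nat)"
    and cyc: "is_cycle S" and SC: "edge_verts S \<subseteq> C"
  shows "\<not> S \<subseteq> (\<lambda>v. toE v (par v)) ` (C - {r})"
proof
  assume sub: "S \<subseteq> (\<lambda>v. toE v (par v)) ` (C - {r})"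
  have finS: "finite S" "S \<noteq> {}" using cyc by (auto simp: is_cycle_def)
  have fin: "finite (edge_verts S)" using finS by (simp add: edge_verts_def)
  have ne: "edge_verts S \<noteq> {}" using finS by (auto simp: edge_verts_def)
  define m where "m = Max (dep ` edge_verts S)"
  have "m \<in> dep ` edge_verts S" unfolding m_def using fin ne by (intro Max_in) auto
  then obtain v where v: "v \<in> edge_verts S" "dep v = m" by auto
  have maxv: "dep w \<le> dep v" if "w \<in> edge_verts S" for w
    using that fin v(2) unfolding m_def by auto
  have nb: "w = par v" if "edge_adj S v w" for w
  proof -
    have ow: "opp v w" "toE v w \<in> S" using that by (auto simp: edge_adj_iff)
    then obtain u where u: "u \<in> C - {r}" "toE v w = toE u (par u)" using sub by blast
    have "opp u (par u)" using tree u opp_sym by auto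
    from toE_eq[OF ow(1) this u(2)] have "(v = u \<and> w = par u) \<or> (v = par u \<and> w = u)" .
    then show ?thesis
    proof
      assume "v = par u \<and> w = u"
      then have "Suc (dep v) = dep w" using tree u by auto
      moreover have "w \<in> edge_verts S" using that by (rule edge_adj_verts)
      ultimately show ?thesis using maxv by fastforce
    qed simp
  qed
  have "edge_deg S v = 2" using cyc v(1) by (auto simp: is_cycle_def)
  then have "card {w. edge_adj S v w} = 2" by (simp add: edge_deg_card)
  then obtain w1 w2 where "{w. edge_adj S v w} = {w1, w2}" "w1 \<noteq> w2" by (auto simp: card_2_iff)
  then have "edge_adj S v w1" "edge_adj S v w2" "w1 \<noteq> w2" by auto
  then show False using nb by auto
qed

definition side :: "nat set \<Rightarrow> nat set \<Rightarrow> nat + nat \<Rightarrow> (nat + nat) set" where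
  "side A B v = (case v of Inl _ \<Rightarrow> Inr ` B | Inr _ \<Rightarrow> Inl ` A)"

definition Pedges :: "(nat + nat) set \<Rightarrow> nat + nat \<Rightarrow> (nat + nat \<Rightarrow> nat + nat) \<Rightarrow> (nat \<times> nat) set" where
  "Pedges C r par = (\<lambda>v. toE v (par v)) ` (C - {r})"

definition cverts :: "nat set \<Rightarrow> nat set \<Rightarrow> (nat + nat) set" where
  "cverts A B = Inl ` A \<union> Inr ` B"

definition Wit :: "nat set \<Rightarrow> nat set \<Rightarrow> (nat \<times> nat) set set" where
  "Wit A B = (\<lambda>(par, e). Pedges (cverts A B) (Inl (Min A)) par \<union> {e}) `
      (PiE (cverts A B) (side A B) \<times> (A \<times> B))"

definition Zset :: "nat \<Rightarrow> nat \<Rightarrow> nat set \<Rightarrow> nat set \<Rightarrow> (nat \<times> nat) set" where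
  "Zset n1 n2 A B = {(i, j). i < n1 \<and> j < n2 \<and> (i \<in> A \<longleftrightarrow> j \<notin> B)}"

definition Ev :: "nat \<Rightarrow> nat \<Rightarrow> nat set \<Rightarrow> nat set \<Rightarrow> (nat \<times> nat \<Rightarrow> bool) set" where
  "Ev n1 n2 A B = {G. (\<forall>e\<in>Zset n1 n2 A B. \<not> G e) \<and>
      (\<exists>H\<in>Wit A B. card H = card A + card B \<and> (\<forall>e\<in>H. G e))}"

lemma rtranclp_edge_adj_sym: "(edge_adj S)\<^sup>*\<^sup>* a b \<Longrightarrow> (edge_adj S)\<^sup>*\<^sup>* b a"
proof (induction rule: rtranclp_induct)
  case (step y z)
  then show ?case using edge_adj_sym
    by (metis converse_rtranclp_into_rtranclp)
qed simp

lemma card_cverts: "finite A \<Longrightarrow> finite B \<Longrightarrow> card (cverts A B) = card A + card B"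
  unfolding cverts_def
  by (subst card_Un_disjoint) (auto simp: card_image)

lemma comp_Ev:
  assumes C: "C \<in> bip_components n1 n2 G" and uc: "unicyclic n1 n2 G C"
  defines "A \<equiv> {i. Inl i \<in> C}" and "B \<equiv> {j. Inr j \<in> C}"
  shows "G \<in> Ev n1 n2 A B \<and> C = cverts A B \<and> A \<noteq> {} \<and> A \<subseteq> {..<n1} \<and> B \<subseteq> {..<n2}"
proof -
  define E where "E = bip_edges n1 n2 G"
  define R where "R = edge_adj E"
  obtain u where u: "u \<in> bip_V n1 n2" and Cdef: "C = {v \<in> bip_V n1 n2. R\<^sup>*\<^sup>* u v}"
    using C unfolding bip_components_def R_def E_def by blast
  have RV: "y \<in> bip_V n1 n2" if "R x y" for x y
    using that by (auto simp: R_def E_def edge_adj_def bip_edges_def bip_V_def)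
  have closed: "y \<in> C" if "x \<in> C" "R x y" for x y
    using that RV Cdef by auto
  have conn: "R\<^sup>*\<^sup>* x y" if "x \<in> C" "y \<in> C" for x y
  proof -
    have ux: "R\<^sup>*\<^sup>* u x" and uy: "R\<^sup>*\<^sup>* u y" using that Cdef by auto
    have "R\<^sup>*\<^sup>* x u" using ux unfolding R_def by (rule rtranclp_edge_adj_sym)
    then show ?thesis using uy by (rule rtranclp_trans)
  qed
  have CV: "C \<subseteq> bip_V n1 n2" using Cdef by auto
  have AB: "A \<subseteq> {..<n1}" "B \<subseteq> {..<n2}"
    using CV by (auto simp: A_def B_def bip_V_def)
  have finAB: "finite A" "finite B" using AB finite_subset by auto
  have Ceq: "C = cverts A B"
  proof -
    have "v \<in> cverts A B" if "v \<in> C" for v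
      using that by (cases v) (auto simp: cverts_def A_def B_def)
    then show ?thesis by (auto simp: cverts_def A_def B_def)
  qed
  have finC: "finite C" using Ceq finAB by (simp add: cverts_def)
  have "card {S. S \<subseteq> comp_edges n1 n2 G C \<and> is_cycle S} = 1"
    using uc by (simp add: unicyclic_def)
  then obtain S where S: "S \<subseteq> comp_edges n1 n2 G C" "is_cycle S"
    by (metis (no_types, lifting) card_1_singletonE insertI1 mem_Collect_eq)
  have SE: "S \<subseteq> E" using S(1) by (auto simp: comp_edges_def E_def)
  have SC: "Inl i \<in> C \<and> Inr j \<in> C" if "(i, j) \<in> S" for i j
  proof -
    have "Inl i \<in> C" "(i, j) \<in> E" using that S(1) by (auto simp: comp_edges_def E_def)
    moreover have "R (Inl i) (Inr j)" using \<open>(i, j) \<in> E\<close> by (auto simp: R_def edge_adj_def)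
    ultimately show ?thesis using closed by blast
  qed
  have SvC: "edge_verts S \<subseteq> C" using SC by (force simp: edge_verts_def)
  obtain i0 j0 where ij0: "(i0, j0) \<in> S" using S(2) by (auto simp: is_cycle_def)
  have Ane: "A \<noteq> {}" and Bne: "B \<noteq> {}" using SC[OF ij0] by (auto simp: A_def B_def)
  define r :: "nat + nat" where "r = Inl (Min A)"
  have rC: "r \<in> C" using Min_in[OF finAB(1) Ane] by (simp add: r_def A_def)
  obtain par dep where tree0: "\<forall>v\<in>C-{r}. R (par v) v \<and> par v \<in> C \<and> Suc (dep (par v)) = (dep v::nat)"
  proof -
    have "\<exists>par dep. \<forall>v\<in>C-{r}. R (par v) v \<and> par v \<in> C \<and> Suc (dep (par v)) = (dep v::nat)"
      by (rule bfs_tree[of r C R]) (use rC closed conn in auto)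
    then show ?thesis using that by blast
  qed
  have tree: "\<forall>v\<in>C-{r}. opp (par v) v \<and> par v \<in> C \<and> Suc (dep (par v)) = dep v"
    using tree0 by (auto simp: R_def edge_adj_iff)
  obtain e where e: "e \<in> S" "e \<notin> (\<lambda>v. toE v (par v)) ` (C - {r})"
    using tree_cycle[OF tree S(2) SvC] by blast
  define par' where "par' = restrict (\<lambda>v. if v = r then Inr (Min B) else par v) C"
  have par'PiE: "par' \<in> PiE (cverts A B) (side A B)"
  proof -
    have "par' v \<in> side A B v" if "v \<in> C" for v
    proof (cases "v = r")
      case True then show ?thesis using Min_in[OF finAB(2) Bne] that
        by (simp add: par'_def r_def side_def)
    next
      case False
      then have "opp (par v) v" "par v \<in> C" using tree that by auto
      then show ?thesis using False that
        by (cases v) (auto simp: par'_def side_def opp_def A_def B_def)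
    qed
    then show ?thesis using Ceq[symmetric] by (auto simp: par'_def)
  qed
  have Peq: "Pedges C r par' = (\<lambda>v. toE v (par v)) ` (C - {r})"
    unfolding Pedges_def by (intro image_cong) (auto simp: par'_def)
  have eAB: "e \<in> A \<times> B" using e(1) SC by (cases e) (auto simp: A_def B_def)
  define H where "H = Pedges C r par' \<union> {e}"
  have HW: "H \<in> Wit A B"
    unfolding Wit_def H_def using par'PiE eAB Ceq r_def
    by (intro image_eqI[where x="(par', e)"]) auto
  have "card H = card (C - {r}) + 1"
    unfolding H_def Peq using e(2) finC
    by (subst card_Un_disjoint) (auto simp: card_image[OF tree_inj[OF tree]])
  also have "\<dots> = card A + card B" using rC finC Ceq card_cverts[OF finAB]
    by (simp add: card_Diff_singleton) (metis Suc_pred card_gt_0_iff emptyE)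
  finally have cardH: "card H = card A + card B" .
  have HE: "H \<subseteq> E"
  proof -
    have "toE v (par v) \<in> E" if "v \<in> C - {r}" for v
      using tree0 that by (auto simp: R_def edge_adj_iff toE_sym)
    then show ?thesis unfolding H_def Peq using SE e(1) by blast
  qed
  have GH: "\<forall>e\<in>H. G e" using HE by (auto simp: E_def bip_edges_def)
  have GZ: "\<forall>e\<in>Zset n1 n2 A B. \<not> G e"
  proof safe
    fix i j assume z: "(i, j) \<in> Zset n1 n2 A B" and g: "G (i, j)"
    then have "(i, j) \<in> E" by (auto simp: Zset_def E_def bip_edges_def)
    then have "R (Inl i) (Inr j)" "R (Inr j) (Inl i)" by (auto simp: R_def edge_adj_def)
    then show False using z closed by (auto simp: Zset_def A_def B_def)
  qed
  show ?thesis using GZ GH HW cardH Ceq Ane AB by (auto simp: Ev_def)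
qed

lemma card_PiE_side:
  assumes "finite A" "finite B"
  shows "card (PiE (cverts A B) (side A B)) = card B ^ card A * card A ^ card B"
proof -
  have fin: "finite (cverts A B)" using assms by (simp add: cverts_def)
  have "card (PiE (cverts A B) (side A B)) = (\<Prod>v\<in>cverts A B. card (side A B v))"
    using fin by (rule card_PiE)
  also have "\<dots> = (\<Prod>v\<in>Inl ` A. card (side A B v)) * (\<Prod>v\<in>Inr ` B. card (side A B v))"
    unfolding cverts_def using assms by (subst prod.union_disjoint) auto
  also have "(\<Prod>v\<in>Inl ` A. card (side A B v)) = card B ^ card A"
    by (subst prod.reindex) (auto simp: side_def card_image)
  also have "(\<Prod>v\<in>Inr ` B. card (side A B v)) = card A ^ card B"
    by (subst prod.reindex) (auto simp: side_def card_image)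
  finally show ?thesis .
qed

lemma card_Wit:
  assumes "finite A" "finite B"
  shows "card (Wit A B) \<le> card B ^ card A * card A ^ card B * (card A * card B)"
proof -
  have "card (Wit A B) \<le> card (PiE (cverts A B) (side A B) \<times> (A \<times> B))"
    unfolding Wit_def by (rule card_image_le) (use assms in \<open>auto simp: cverts_def side_def split: sum.splits intro!: finite_cartesian_product finite_PiE\<close>)
  also have "\<dots> = card B ^ card A * card A ^ card B * (card A * card B)"
    using assms by (simp add: card_cartesian_product card_PiE_side)
  finally show ?thesis .
qed

lemma finite_Wit: "finite A \<Longrightarrow> finite B \<Longrightarrow> finite (Wit A B)"
  unfolding Wit_def by (rule finite_imageI) (auto simp: cverts_def side_def split: sum.splits intro!: finite_cartesian_product finite_PiE)

lemma Wit_sub: "H \<in> Wit A B \<Longrightarrow> H \<subseteq> A \<times> B"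
proof -
  assume "H \<in> Wit A B"
  then obtain par e where pe: "par \<in> PiE (cverts A B) (side A B)" "e \<in> A \<times> B"
    and H: "H = Pedges (cverts A B) (Inl (Min A)) par \<union> {e}"
    unfolding Wit_def by auto
  have "toE v (par v) \<in> A \<times> B" if "v \<in> cverts A B" for v
  proof -
    have "par v \<in> side A B v" using pe that by auto
    then show ?thesis using that by (cases v) (auto simp: side_def cverts_def)
  qed
  then have "Pedges (cverts A B) (Inl (Min A)) par \<subseteq> A \<times> B" unfolding Pedges_def by blast
  then show ?thesis using pe H by auto
qed

lemma prob_HZ:
  fixes D :: "'a set"
  assumes D: "finite D" and HD: "H \<subseteq> D" and ZD: "Z \<subseteq> D" and HZ: "H \<inter> Z = {}"
    and p: "0 \<le> p" "p \<le> 1"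
  shows "measure_pmf.prob (Pi_pmf D False (\<lambda>_. bernoulli_pmf p)) {G. (\<forall>e\<in>Z. \<not> G e) \<and> (\<forall>e\<in>H. G e)}
     = p ^ card H * (1 - p) ^ card Z"
proof -
  define M where "M = Pi_pmf D False (\<lambda>_. bernoulli_pmf p)"
  define Bf where "Bf e = (if e \<in> H then {True} else if e \<in> Z then {False} else UNIV)" for e
  have sub: "set_pmf M \<subseteq> PiE_dflt D False (set_pmf \<circ> (\<lambda>_. bernoulli_pmf p))"
    unfolding M_def by (rule set_Pi_pmf_subset'[OF D])
  have "{G. (\<forall>e\<in>Z. \<not> G e) \<and> (\<forall>e\<in>H. G e)} \<inter> set_pmf M = PiE_dflt D False Bf \<inter> set_pmf M"
  proof (intro equalityI subsetI)
    fix G assume "G \<in> {G. (\<forall>e\<in>Z. \<not> G e) \<and> (\<forall>e\<in>H. G e)} \<inter> set_pmf M"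
    then show "G \<in> PiE_dflt D False Bf \<inter> set_pmf M"
      using sub unfolding PiE_dflt_def Bf_def by auto
  next
    fix G assume G: "G \<in> PiE_dflt D False Bf \<inter> set_pmf M"
    then have GB: "G x \<in> Bf x" if "x \<in> D" for x using that unfolding PiE_dflt_def by blast
    have "\<not> G e" if "e \<in> Z" for e
    proof -
      have "e \<in> D" "e \<notin> H" using that ZD HZ by auto
      then have "G e \<in> {False}" using GB[of e] that unfolding Bf_def by simp
      then show ?thesis by simp
    qed
    moreover have "G e" if "e \<in> H" for e
    proof -
      have "e \<in> D" using that HD by auto
      then have "G e \<in> {True}" using GB[of e] that unfolding Bf_def by simp
      then show ?thesis by simp
    qed
    ultimately show "G \<in> {G. (\<forall>e\<in>Z. \<not> G e) \<and> (\<forall>e\<in>H. G e)} \<inter> set_pmf M" using G by blast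
  qed
  then have "measure_pmf.prob M {G. (\<forall>e\<in>Z. \<not> G e) \<and> (\<forall>e\<in>H. G e)} = measure_pmf.prob M (PiE_dflt D False Bf)"
    by (metis (no_types) measure_Int_set_pmf)
  also have "\<dots> = (\<Prod>e\<in>D. measure_pmf.prob (bernoulli_pmf p) (Bf e))"
    unfolding M_def by (rule measure_Pi_pmf_PiE_dflt[OF D])
  also have "\<dots> = (\<Prod>e\<in>D. if e \<in> H then p else if e \<in> Z then 1 - p else 1)"
    using p by (intro prod.cong) (auto simp: Bf_def measure_pmf_single)
  also have "\<dots> = p ^ card H * (1 - p) ^ card Z"
  proof -
    define f where "f e = (if e \<in> H then p else if e \<in> Z then 1 - p else 1)" for e
    have "prod f D = prod f H * prod f (D - H)"
      using prod.subset_diff[OF HD D, of f] by (simp add: mult.commute)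
    also have "prod f (D - H) = prod f Z * prod f (D - H - Z)"
    proof -
      have "Z \<subseteq> D - H" using ZD HZ by auto
      from prod.subset_diff[OF this finite_Diff[OF D], of f] show ?thesis by (simp add: mult.commute)
    qed
    also have "prod f H = p ^ card H" unfolding f_def by simp
    also have "prod f Z = (1 - p) ^ card Z" unfolding f_def using HZ
      by (subst prod.cong[where h="\<lambda>_. 1 - p"]) auto
    also have "prod f (D - H - Z) = 1" unfolding f_def by (intro prod.neutral) auto
    finally show ?thesis unfolding f_def by simp
  qed
  finally show ?thesis unfolding M_def .
qed

lemma card_Zset:
  assumes "A \<subseteq> {..<n1}" "B \<subseteq> {..<n2}"
  shows "card (Zset n1 n2 A B) = card A * (n2 - card B) + card B * (n1 - card A)"
proof -
  have fin: "finite A" "finite B" using assms finite_subset by auto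
  have "Zset n1 n2 A B = A \<times> ({..<n2} - B) \<union> ({..<n1} - A) \<times> B"
    using assms by (auto simp: Zset_def)
  moreover have "card (A \<times> ({..<n2} - B) \<union> ({..<n1} - A) \<times> B)
      = card A * (n2 - card B) + card B * (n1 - card A)"
  proof -
    have c1: "card (A \<times> ({..<n2} - B)) = card A * (n2 - card B)"
      using assms fin by (simp add: card_cartesian_product card_Diff_subset)
    have c2: "card (({..<n1} - A) \<times> B) = card B * (n1 - card A)"
      using assms fin by (simp add: card_cartesian_product card_Diff_subset)
    have "(A \<times> ({..<n2} - B)) \<inter> (({..<n1} - A) \<times> B) = {}" by blast
    moreover have "finite (A \<times> ({..<n2} - B))" "finite (({..<n1} - A) \<times> B)" using fin by auto
    ultimately show ?thesis using c1 c2 by (simp add: card_Un_disjoint)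
  qed
  ultimately show ?thesis by simp
qed

lemma prob_Ev:
  assumes AB: "A \<subseteq> {..<n1}" "B \<subseteq> {..<n2}" and p: "0 \<le> p" "p \<le> 1"
  shows "measure_pmf.prob (bip_random n1 n2 p) (Ev n1 n2 A B) \<le>
    real (card B ^ card A * card A ^ card B * (card A * card B)) * p ^ (card A + card B)
      * (1 - p) ^ (card A * (n2 - card B) + card B * (n1 - card A))"
proof -
  have fin: "finite A" "finite B" using AB finite_subset by auto
  define D where "D = {..<n1} \<times> {..<n2}"
  define W where "W = {H \<in> Wit A B. card H = card A + card B}"
  define F where "F H = {G. (\<forall>e\<in>Zset n1 n2 A B. \<not> G e) \<and> (\<forall>e\<in>H. G e)}" for H
  define Q where "Q = p ^ (card A + card B) * (1 - p) ^ (card A * (n2 - card B) + card B * (n1 - card A))"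
  have finW: "finite W" using finite_Wit[OF fin] by (simp add: W_def)
  have "Ev n1 n2 A B \<subseteq> (\<Union>H\<in>W. F H)"
    by (auto simp: Ev_def W_def F_def)
  then have "measure_pmf.prob (bip_random n1 n2 p) (Ev n1 n2 A B) \<le>
      measure_pmf.prob (bip_random n1 n2 p) (\<Union>H\<in>W. F H)"
    by (intro measure_pmf.finite_measure_mono) auto
  also have "\<dots> \<le> (\<Sum>H\<in>W. measure_pmf.prob (bip_random n1 n2 p) (F H))"
    by (rule measure_UNION_le[OF finW]) auto
  also have "\<dots> = (\<Sum>H\<in>W. Q)"
  proof (rule sum.cong[OF refl])
    fix H assume H: "H \<in> W"
    then have HAB: "H \<subseteq> A \<times> B" by (auto simp: W_def dest: Wit_sub)
    have HD: "H \<subseteq> D" using HAB AB by (auto simp: D_def)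
    have ZD: "Zset n1 n2 A B \<subseteq> D" by (auto simp: D_def Zset_def)
    have HZ: "H \<inter> Zset n1 n2 A B = {}" using HAB by (auto simp: Zset_def)
    have "measure_pmf.prob (bip_random n1 n2 p) (F H) = p ^ card H * (1 - p) ^ card (Zset n1 n2 A B)"
      unfolding bip_random_def F_def
      by (rule prob_HZ[OF _ HD[unfolded D_def] ZD[unfolded D_def] HZ p]) simp
    then show "measure_pmf.prob (bip_random n1 n2 p) (F H) = Q"
      using H card_Zset[OF AB] by (simp add: Q_def W_def)
  qed
  also have "\<dots> = real (card W) * Q" by simp
  also have "\<dots> \<le> real (card B ^ card A * card A ^ card B * (card A * card B)) * Q"
  proof (rule mult_right_mono)
    have "card W \<le> card (Wit A B)" unfolding W_def by (rule card_mono[OF finite_Wit[OF fin]]) auto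
    also have "\<dots> \<le> card B ^ card A * card A ^ card B * (card A * card B)" by (rule card_Wit[OF fin])
    finally show "real (card W) \<le> real (card B ^ card A * card A ^ card B * (card A * card B))" by linarith
    show "0 \<le> Q" using p by (simp add: Q_def)
  qed
  finally show ?thesis by (simp add: Q_def mult.assoc)
qed

definition Adm :: "nat \<Rightarrow> nat \<Rightarrow> real \<Rightarrow> real \<Rightarrow> (nat set \<times> nat set) set" where
  "Adm n1 n2 L M = {(A, B). A \<subseteq> {..<n1} \<and> B \<subseteq> {..<n2} \<and> A \<noteq> {} \<and>
      real (card A) \<le> L \<and> real (card B) \<le> M * real (card A)}"

lemma finite_Adm: "finite (Adm n1 n2 L M)"
proof -
  have "Adm n1 n2 L M \<subseteq> Pow {..<n1} \<times> Pow {..<n2}" by (auto simp: Adm_def)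
  then show ?thesis by (rule finite_subset) auto
qed

lemma num_sbu_le:
  "num_sbu \<beta>0 p n1 n2 G \<le> card {AB \<in> Adm n1 n2 (\<beta>0 * (ln (real n1))\<^sup>2) (2 * p * real n2).
      G \<in> Ev n1 n2 (fst AB) (snd AB)}"
proof -
  define K where "K = {C \<in> bip_components n1 n2 G. small_comp \<beta>0 n1 C \<and> balanced_comp p n2 C \<and> unicyclic n1 n2 G C}"
  define h where "h C = ({i. Inl i \<in> C}, {j. Inr j \<in> C})" for C :: "(nat + nat) set"
  have "inj_on h K"
  proof (rule inj_onI)
    fix C C' assume "C \<in> K" "C' \<in> K" "h C = h C'"
    then show "C = C'" using comp_Ev[of C n1 n2 G] comp_Ev[of C' n1 n2 G]
      by (auto simp: K_def h_def)
  qed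
  moreover have "h ` K \<subseteq> {AB \<in> Adm n1 n2 (\<beta>0 * (ln (real n1))\<^sup>2) (2 * p * real n2).
      G \<in> Ev n1 n2 (fst AB) (snd AB)}"
  proof
    fix x assume "x \<in> h ` K"
    then obtain C where C: "C \<in> K" "x = h C" by auto
    define A where "A = {i. Inl i \<in> C}"
    define B where "B = {j. Inr j \<in> C}"
    have ce: "G \<in> Ev n1 n2 A B \<and> C = cverts A B \<and> A \<noteq> {} \<and> A \<subseteq> {..<n1} \<and> B \<subseteq> {..<n2}"
      using comp_Ev[of C n1 n2 G] C(1) by (auto simp: K_def A_def B_def)
    have "N1_part C = Inl ` A" "N2_part C = Inr ` B"
      using ce by (auto simp: N1_part_def N2_part_def cverts_def)
    then have "card (N1_part C) = card A" "card (N2_part C) = card B" by (auto simp: card_image)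
    then show "x \<in> {AB \<in> Adm n1 n2 (\<beta>0 * (ln (real n1))\<^sup>2) (2 * p * real n2).
      G \<in> Ev n1 n2 (fst AB) (snd AB)}"
    proof -
      have x: "x = (A, B)" using C by (simp add: h_def A_def B_def)
      have "small_comp \<beta>0 n1 C" "balanced_comp p n2 C" using C by (auto simp: K_def)
      then have "real (card A) \<le> \<beta>0 * (ln (real n1))\<^sup>2" "real (card B) \<le> 2 * p * real n2 * real (card A)"
        using \<open>card (N1_part C) = card A\<close> \<open>card (N2_part C) = card B\<close>
        by (auto simp: small_comp_def balanced_comp_def)
      then show ?thesis using x ce by (simp add: Adm_def)
    qed
  qed
  ultimately have "card K \<le> card {AB \<in> Adm n1 n2 (\<beta>0 * (ln (real n1))\<^sup>2) (2 * p * real n2).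
      G \<in> Ev n1 n2 (fst AB) (snd AB)}"
    using finite_Adm by (intro card_inj_on_le) auto
  then show ?thesis by (simp add: num_sbu_def K_def)
qed

lemma markov_count:
  fixes M :: "'a pmf" and I :: "'b set"
  assumes I: "finite I" and c: "c > 0"
  shows "measure_pmf.prob M {x. c \<le> real (card {i\<in>I. x \<in> Evs i})} \<le> (\<Sum>i\<in>I. measure_pmf.prob M (Evs i)) / c"
proof -
  define u where "u x = (\<Sum>i\<in>I. indicator (Evs i) x :: real)" for x
  have u: "u x = real (card {i\<in>I. x \<in> Evs i})" for x
    unfolding u_def using I by (simp add: indicator_def sum.If_cases Int_def conj_commute)
  have int: "integrable (measure_pmf M) u"
  proof (rule measure_pmf.integrable_const_bound[where B="real (card I)"])
    show "AE x in measure_pmf M. norm (u x) \<le> real (card I)"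
      using I by (intro AE_I2) (auto simp: u intro!: card_mono)
  qed simp
  have "measure_pmf.prob M {x\<in>space (measure_pmf M). u x \<ge> c} \<le> (\<integral>x. u x \<partial>measure_pmf M) / c"
    by (rule integral_Markov_inequality_measure[OF int, of UNIV]) (auto simp: u c)
  also have "(\<integral>x. u x \<partial>measure_pmf M) = (\<Sum>i\<in>I. measure_pmf.prob M (Evs i))"
  proof -
    have ii: "integrable (measure_pmf M) (indicator (Evs i) :: _ \<Rightarrow> real)" for i
      by (rule measure_pmf.integrable_const_bound[where B=1]) (auto simp: indicator_def)
    have "(\<integral>x. u x \<partial>measure_pmf M) = (\<Sum>i\<in>I. (\<integral>x. indicator (Evs i) x \<partial>measure_pmf M))"
      unfolding u_def using Bochner_Integration.integral_sum[where I=I and M="measure_pmf M" and f="\<lambda>i. indicator (Evs i)", OF ii] by simp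
    then show ?thesis by simp
  qed
  finally show ?thesis by (simp add: u)
qed

lemma exp_ge_term: assumes "0 \<le> (x::real)" shows "x ^ n / fact n \<le> exp x"
proof -
  have "x ^ n / fact n \<le> (\<Sum>k\<le>n. x ^ k / fact k)"
    using assms by (intro member_le_sum) auto
  also have "\<dots> \<le> exp x"
    using assms summable_exp_generic[of x]
    by (auto simp: exp_def divide_inverse ac_simps intro!: sum_le_suminf)
  finally show ?thesis .
qed

lemma fact_ge: "(real a / exp 1) ^ a \<le> fact a"
proof -
  have "real a ^ a / fact a \<le> exp (real a)" by (rule exp_ge_term) simp
  also have "exp (real a) = exp 1 ^ a" by (metis exp_of_nat_mult mult.right_neutral)
  finally have "real a ^ a \<le> fact a * exp 1 ^ a" by (simp add: divide_le_eq mult.commute)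
  then show ?thesis by (simp add: power_divide divide_le_eq)
qed

lemma choose_le: "a > 0 \<Longrightarrow> real (n choose a) \<le> (exp 1 * real n / real a) ^ a"
proof -
  assume a: "a > 0"
  have "real (n choose a) * fact a \<le> real n ^ a"
    using binomial_fact_pow[of n a] by (metis of_nat_fact of_nat_le_iff of_nat_mult of_nat_power)
  then have "real (n choose a) \<le> real n ^ a / fact a" by (simp add: field_simps)
  also have "\<dots> \<le> real n ^ a / (real a / exp 1) ^ a"
    using a by (intro divide_left_mono fact_ge) auto
  also have "\<dots> = (exp 1 * real n / real a) ^ a" by (simp add: power_divide power_mult_distrib field_simps)
  finally show ?thesis .
qed

definition gg :: "real \<Rightarrow> real" where "gg y = ln y + 1 - y"

lemma gg_le0: "y > 0 \<Longrightarrow> gg y \<le> 0"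
  unfolding gg_def using ln_le_minus_one[of y] by simp

lemma key_ineq:
  fixes a b X Y d \<alpha> :: real
  assumes d: "d > 1" and X: "X > 0" and Y: "Y > 0" and XY: "X * Y = d ^ 2" and a: "a > 0" and b: "b > 0"
    and bY: "b * Y = \<alpha> * a" and \<alpha>: "\<alpha> \<ge> d"
  shows "a * gg X + b * gg Y \<le> a * gg d"
proof (cases "X \<ge> d")
  case True
  have "ln (X / d) \<le> X / d - 1" using X d by (intro ln_le_minus_one) auto
  also have "X / d - 1 \<le> X - d"
  proof -
    have "X / d - 1 = (X - d) / d" using d by (simp add: field_simps)
    also have "\<dots> \<le> X - d" using True d by (simp add: divide_le_eq mult_le_cancel_left1)
    finally show ?thesis .
  qed
  finally have "gg X \<le> gg d" using X d by (simp add: gg_def ln_div)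
  then have "a * gg X \<le> a * gg d" using a by simp
  moreover have "b * gg Y \<le> 0" using b gg_le0[OF Y] by (simp add: mult_nonneg_nonpos)
  ultimately show ?thesis by simp
next
  case False
  then have Yd: "Y > d"
  proof -
    have "d * d = X * Y" using XY by (simp add: power2_eq_square)
    also have "\<dots> < d * Y" using False X Y by (intro mult_strict_right_mono) auto
    finally show ?thesis using d by simp
  qed
  define r where "r = Y / d"
  have r: "r \<ge> 1" using Yd d by (simp add: r_def)
  have Yr: "Y = d * r" using d by (simp add: r_def)
  have "ln r \<le> (r - 1) * (1 + ln d)"
  proof -
    have "ln r \<le> r - 1" using r by (intro ln_le_minus_one) auto
    also have "\<dots> \<le> (r - 1) * (1 + ln d)" using r d by (simp add: mult_le_cancel_left1 )
    finally show ?thesis .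
  qed
  then have "1 + ln Y \<le> r * (1 + ln d)"
    using r d by (simp add: Yr ln_mult algebra_simps)
  then have "d * (1 + ln Y) \<le> d * (r * (1 + ln d))"
    using d by (intro mult_left_mono) auto
  then have "d * (1 + ln Y) \<le> Y * (1 + ln d)" by (simp add: Yr algebra_simps)
  then have m: "b * (d * (1 + ln Y)) \<le> b * (Y * (1 + ln d))"
    using b by (intro mult_left_mono) auto
  have m2: "b * (1 + ln Y) \<le> b * Y * (1 + ln d) / d" using m d by (simp add: field_simps)
  have e1: "(b * Y / d) * gg d = b * Y * (1 + ln d) / d - b * Y" using d by (simp add: gg_def field_simps)
  have e2: "b * gg Y = b * (1 + ln Y) - b * Y" by (simp add: gg_def algebra_simps)
  have "b * gg Y \<le> (b * Y / d) * gg d" using m2 e1 e2 by linarith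
  also have "\<dots> = (\<alpha> * a / d) * gg d" by (simp add: bY)
  also have "\<dots> \<le> a * gg d"
  proof -
    have "a \<le> \<alpha> * a / d" using a d \<alpha> by (simp add: field_simps)
    then show ?thesis using gg_le0[of d] d by (intro mult_right_mono_neg) auto
  qed
  finally have "b * gg Y \<le> a * gg d" .
  moreover have "a * gg X \<le> 0" using a gg_le0[OF X] by (simp add: mult_nonneg_nonpos)
  ultimately show ?thesis by simp
qed

lemma c_pos: "d > 1 \<Longrightarrow> d - 1 - ln d > (0::real)"
proof -
  assume d: "d > 1"
  have s: "sqrt d > 1" using d by simp
  have "ln d = 2 * ln (sqrt d)" using d by (simp add: ln_sqrt)
  also have "\<dots> \<le> 2 * (sqrt d - 1)" using ln_le_minus_one[of "sqrt d"] s by simp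
  finally have "d - 1 - ln d \<ge> (sqrt d - 1)^2" using d by (simp add: power2_eq_square algebra_simps)
  moreover have "(sqrt d - 1)^2 > 0" using s by simp
  ultimately show ?thesis by linarith
qed

lemma pow_exp: "x > 0 \<Longrightarrow> (exp 1 * x) ^ n = exp (real n * (1 + ln x))"
proof -
  assume x: "x > 0"
  have "exp (real n * (1 + ln x)) = exp (1 + ln x) ^ n" by (rule exp_of_nat_mult)
  also have "exp (1 + ln x) = exp 1 * x" using x by (simp add: exp_add)
  finally show ?thesis by simp
qed

lemma sq_exp_bound: fixes c a :: real assumes c: "c > 0" and a: "a \<ge> 0" shows "a^2 * exp (- (c * a)) \<le> 2 / c^2"
proof -
  have "(c * a)^2 / fact 2 \<le> exp (c * a)" using c a exp_ge_term[of "c * a" 2] by simp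
  then have "c^2 * a^2 \<le> 2 * exp (c * a)" by (simp add: power_mult_distrib)
  then have "a^2 \<le> 2 * exp (c * a) / c^2" using c by (simp add: field_simps)
  then have "a^2 * exp (- (c * a)) \<le> (2 * exp (c * a) / c^2) * exp (- (c * a))"
    by (intro mult_right_mono) auto
  also have "\<dots> = 2 / c^2" by (simp add: exp_minus field_simps)
  finally show ?thesis .
qed

lemma term_bound:
  fixes n1 n2 a b :: nat and p d :: real
  assumes n1: "n1 \<ge> 1" and n2: "n2 \<ge> 1" and pdef: "p = d / sqrt (real n1 * real n2)" and d: "d > 1"
    and p1: "p \<le> 1" and n12: "real n1 \<le> real n2" and a: "a \<ge> 1" "a \<le> n1" and b: "b \<le> n2"
    and bal: "real b \<le> 2 * p * real n2 * real a"
  shows "real (n1 choose a) * real (n2 choose b) * (real (b ^ a * a ^ b * (a * b)) * p ^ (a + b)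
      * (1 - p) ^ (a * (n2 - b) + b * (n1 - a)))
    \<le> 4 * (p * real n2) / (d - 1 - ln d)^2 * exp (2 * p * real a * real b)"
proof -
  define c where "c = d - 1 - ln d"
  have c: "c > 0" using c_pos[OF d] by (simp add: c_def)
  define \<alpha> where "\<alpha> = p * real n2"
  define \<beta> where "\<beta> = p * real n1"
  have sq: "sqrt (real n1 * real n2) > 0" using n1 n2 by simp
  have p0: "p > 0" using d sq by (simp add: pdef)
  have ab: "\<alpha> * \<beta> = d^2"
  proof -
    have "\<alpha> * \<beta> = p^2 * (real n1 * real n2)" by (simp add: \<alpha>_def \<beta>_def power2_eq_square)
    also have "\<dots> = d^2" using sq n1 n2 by (simp add: pdef power_divide)
    finally show ?thesis .
  qed
  have \<alpha>d: "\<alpha> \<ge> d"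
  proof -
    have "\<alpha>^2 = p^2 * (real n2 * real n2)" by (simp add: \<alpha>_def power2_eq_square)
    also have "\<dots> \<ge> p^2 * (real n1 * real n2)" using n12 n2 by (intro mult_left_mono) auto
    also have "p^2 * (real n1 * real n2) = d^2" using ab by (simp add: \<alpha>_def \<beta>_def power2_eq_square algebra_simps)
    finally have "d^2 \<le> \<alpha>^2" .
    moreover have "\<alpha> \<ge> 0" using p0 by (simp add: \<alpha>_def)
    ultimately show ?thesis using d by (simp add: power2_le_iff_abs_le abs_of_pos)
  qed
  have RHS0: "0 \<le> 4 * (p * real n2) / (d - 1 - ln d)^2 * exp (2 * p * real a * real b)"
    using p0 by simp
  show ?thesis
  proof (cases "b = 0")
    case True
    then show ?thesis using a RHS0 by simp
  next
    case False
    then have b1: "b \<ge> 1" by simp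
    define X where "X = \<beta> * real b / real a"
    define Y where "Y = \<alpha> * real a / real b"
    have X: "X > 0" and Y: "Y > 0" using p0 a b1 n1 n2 by (auto simp: X_def Y_def \<alpha>_def \<beta>_def)
    have XY: "X * Y = d^2" using ab a b1 by (simp add: X_def Y_def field_simps)
    have bY: "real b * Y = \<alpha> * real a" using b1 by (simp add: Y_def)
    have aX: "real a * X = \<beta> * real b" using a by (simp add: X_def)
    have t1: "real (n1 choose a) * (real b * p) ^ a \<le> (exp 1 * X) ^ a"
    proof -
      have "real (n1 choose a) * (real b * p) ^ a \<le> (exp 1 * real n1 / real a) ^ a * (real b * p) ^ a"
        using choose_le[of a n1] a p0 by (intro mult_right_mono) auto
      also have "\<dots> = (exp 1 * X) ^ a"
      proof -
        have "(exp 1 * real n1 / real a) * (real b * p) = exp 1 * X" using a by (simp add: X_def \<beta>_def field_simps)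
        then show ?thesis by (metis power_mult_distrib)
      qed
      finally show ?thesis .
    qed
    have t2: "real (n2 choose b) * (real a * p) ^ b \<le> (exp 1 * Y) ^ b"
    proof -
      have "real (n2 choose b) * (real a * p) ^ b \<le> (exp 1 * real n2 / real b) ^ b * (real a * p) ^ b"
        using choose_le[of b n2] b1 p0 by (intro mult_right_mono) auto
      also have "\<dots> = (exp 1 * Y) ^ b"
      proof -
        have "(exp 1 * real n2 / real b) * (real a * p) = exp 1 * Y" using b1 by (simp add: Y_def \<alpha>_def field_simps)
        then show ?thesis by (metis power_mult_distrib)
      qed
      finally show ?thesis .
    qed
    define N where "N = a * (n2 - b) + b * (n1 - a)"
    have pN: "p * real N = real a * X + real b * Y - 2 * p * real a * real b"
    proof -
      have "real N = real a * (real n2 - real b) + real b * (real n1 - real a)"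
        using a b by (simp add: N_def of_nat_diff)
      then have "p * real N = p * (real a * (real n2 - real b) + real b * (real n1 - real a))" by simp
      then show ?thesis using aX bY by (simp add: \<alpha>_def \<beta>_def algebra_simps)
    qed
    have t3: "(1 - p) ^ N \<le> exp (- (real a * X + real b * Y) + 2 * p * real a * real b)"
    proof -
      have "(1 - p) ^ N \<le> exp (- p) ^ N"
        using p1 exp_ge_add_one_self[of "-p"] by (intro power_mono) auto
      also have "\<dots> = exp (- (p * real N))" by (simp add: exp_of_nat_mult[symmetric] mult.commute)
      also have "- (p * real N) = - (real a * X + real b * Y) + 2 * p * real a * real b" using pN by simp
      finally show ?thesis .
    qed
    have "real (n1 choose a) * real (n2 choose b) * (real (b ^ a * a ^ b * (a * b)) * p ^ (a + b) * (1 - p) ^ N)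
        = (real (n1 choose a) * (real b * p) ^ a) * (real (n2 choose b) * (real a * p) ^ b)
          * (real a * real b) * (1 - p) ^ N"
      by (simp add: power_mult_distrib power_add mult_ac)
    also have "\<dots> \<le> (exp 1 * X) ^ a * (exp 1 * Y) ^ b * (real a * real b)
          * exp (- (real a * X + real b * Y) + 2 * p * real a * real b)"
      using t1 t2 t3 p1 p0 X Y
      by (intro mult_mono) (auto intro!: mult_nonneg_nonneg zero_le_power)
    also have "(exp 1 * X) ^ a * (exp 1 * Y) ^ b * (real a * real b)
          * exp (- (real a * X + real b * Y) + 2 * p * real a * real b)
        = (real a * real b) * exp (real a * gg X + real b * gg Y) * exp (2 * p * real a * real b)"
    proof -
      define W where "W = - (real a * X + real b * Y) + 2 * p * real a * real b"
      have "(exp 1 * X) ^ a * (exp 1 * Y) ^ b * (real a * real b) * exp W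
         = (real a * real b) * exp (real a * (1 + ln X) + real b * (1 + ln Y) + W)"
        by (simp only: pow_exp[OF X] pow_exp[OF Y] exp_add) (simp add: mult_ac)
      also have "real a * (1 + ln X) + real b * (1 + ln Y) + W
         = (real a * gg X + real b * gg Y) + 2 * p * real a * real b"
        by (simp add: gg_def W_def algebra_simps)
      finally show ?thesis by (simp add: W_def exp_add mult_ac)
    qed
    also have "\<dots> \<le> (real a * real b) * exp (real a * gg d) * exp (2 * p * real a * real b)"
      using key_ineq[OF d X Y XY _ _ bY \<alpha>d] a b1 by (intro mult_mono) auto
    also have "\<dots> \<le> (2 * \<alpha> * real a ^ 2) * exp (- (c * real a)) * exp (2 * p * real a * real b)"
    proof -
      have "real a * real b \<le> 2 * \<alpha> * real a ^ 2"
        using bal a by (simp add: \<alpha>_def power2_eq_square mult_right_mono algebra_simps)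
      moreover have "real a * gg d = - (c * real a)" by (simp add: gg_def c_def algebra_simps)
      ultimately show ?thesis by (intro mult_right_mono) auto
    qed
    also have "\<dots> = 2 * \<alpha> * (real a ^ 2 * exp (- (c * real a))) * exp (2 * p * real a * real b)"
      by simp
    also have "\<dots> \<le> 2 * \<alpha> * (2 / c^2) * exp (2 * p * real a * real b)"
      using sq_exp_bound[OF c, of "real a"] p0 by (intro mult_right_mono mult_left_mono) (auto simp: \<alpha>_def)
    also have "\<dots> = 4 * (p * real n2) / (d - 1 - ln d)^2 * exp (2 * p * real a * real b)"
      by (simp add: \<alpha>_def c_def)
    finally show ?thesis by (simp add: N_def)
  qed
qed

lemma sum_Pow_card:
  fixes f :: "nat \<Rightarrow> real"
  assumes S: "finite S"
  shows "(\<Sum>A\<in>Pow S. f (card A)) = (\<Sum>k\<le>card S. real (card S choose k) * f k)"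
proof -
  have "(\<Sum>A\<in>Pow S. f (card A)) = (\<Sum>k\<le>card S. \<Sum>A\<in>{A. A \<in> Pow S \<and> card A = k}. f (card A))"
    using S by (intro sum.group[symmetric]) (auto intro: card_mono)
  also have "\<dots> = (\<Sum>k\<le>card S. real (card S choose k) * f k)"
  proof (rule sum.cong[OF refl])
    fix k
    have "(\<Sum>A\<in>{A. A \<in> Pow S \<and> card A = k}. f (card A)) = (\<Sum>A\<in>{A. A \<subseteq> S \<and> card A = k}. f k)"
      by (intro sum.cong) auto
    also have "\<dots> = real (card {A. A \<subseteq> S \<and> card A = k}) * f k" by simp
    also have "card {A. A \<subseteq> S \<and> card A = k} = card S choose k" using S by (rule n_subsets)
    finally show "(\<Sum>A\<in>{A. A \<in> Pow S \<and> card A = k}. f (card A)) = real (card S choose k) * f k" .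
  qed
  finally show ?thesis .
qed

definition wt :: "nat \<Rightarrow> nat \<Rightarrow> real \<Rightarrow> nat \<Rightarrow> nat \<Rightarrow> real" where
  "wt n1 n2 p a b = real (b ^ a * a ^ b * (a * b)) * p ^ (a + b) * (1 - p) ^ (a * (n2 - b) + b * (n1 - a))"

definition admf :: "real \<Rightarrow> real \<Rightarrow> nat \<Rightarrow> nat \<Rightarrow> bool" where
  "admf L M a b = (1 \<le> a \<and> real a \<le> L \<and> real b \<le> M * real a)"

lemma finite_bound:
  fixes n1 n2 :: nat and p d L :: real
  assumes n1: "n1 \<ge> 1" and n2: "n2 \<ge> 1" and pdef: "p = d / sqrt (real n1 * real n2)" and d: "d > 1"
    and p1: "p \<le> 1" and n12: "real n1 \<le> real n2" and L: "L \<ge> 0"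
  shows "(\<Sum>AB\<in>Adm n1 n2 L (2 * p * real n2). measure_pmf.prob (bip_random n1 n2 p) (Ev n1 n2 (fst AB) (snd AB)))
    \<le> L * (2 * p * real n2 * L + 1) * (4 * (p * real n2) / (d - 1 - ln d)^2 * exp (2 * p * L * (2 * p * real n2 * L)))"
proof -
  define M where "M = 2 * p * real n2"
  define Bd where "Bd = 4 * (p * real n2) / (d - 1 - ln d)^2 * exp (2 * p * L * (M * L))"
  have p0: "p > 0" using d n1 n2 by (simp add: pdef)
  have M0: "M \<ge> 0" using p0 by (simp add: M_def)
  define F where "F a b = (if admf L M a b then wt n1 n2 p a b else 0)" for a b
  have "(\<Sum>AB\<in>Adm n1 n2 L M. measure_pmf.prob (bip_random n1 n2 p) (Ev n1 n2 (fst AB) (snd AB)))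
      \<le> (\<Sum>AB\<in>Adm n1 n2 L M. wt n1 n2 p (card (fst AB)) (card (snd AB)))"
  proof (rule sum_mono)
    fix AB assume "AB \<in> Adm n1 n2 L M"
    then obtain A B where AB: "AB = (A, B)" "A \<subseteq> {..<n1}" "B \<subseteq> {..<n2}" by (cases AB) (auto simp: Adm_def)
    show "measure_pmf.prob (bip_random n1 n2 p) (Ev n1 n2 (fst AB) (snd AB)) \<le> wt n1 n2 p (card (fst AB)) (card (snd AB))"
      using prob_Ev[OF AB(2,3), of p] p0 p1 unfolding AB(1) wt_def by simp
  qed
  also have "\<dots> = (\<Sum>AB\<in>Pow {..<n1} \<times> Pow {..<n2}. F (card (fst AB)) (card (snd AB)))"
  proof -
    have sub: "Adm n1 n2 L M \<subseteq> Pow {..<n1} \<times> Pow {..<n2}" by (auto simp: Adm_def)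
    have "(\<Sum>AB\<in>Pow {..<n1} \<times> Pow {..<n2}. F (card (fst AB)) (card (snd AB)))
        = (\<Sum>AB\<in>Adm n1 n2 L M. F (card (fst AB)) (card (snd AB)))"
    proof (rule sum.mono_neutral_right[OF _ sub])
      show "finite (Pow {..<n1} \<times> Pow {..<n2})" by auto
      show "\<forall>i\<in>Pow {..<n1} \<times> Pow {..<n2} - Adm n1 n2 L M. F (card (fst i)) (card (snd i)) = 0"
      proof
        fix i assume i: "i \<in> Pow {..<n1} \<times> Pow {..<n2} - Adm n1 n2 L M"
        then have fin: "finite (fst i)" by (cases i) (auto intro: finite_subset[of _ "{..<n1}"])
        show "F (card (fst i)) (card (snd i)) = 0"
          using i fin by (cases i) (auto simp: F_def admf_def Adm_def card_gt_0_iff Suc_le_eq)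
      qed
    qed
    moreover have "(\<Sum>AB\<in>Adm n1 n2 L M. F (card (fst AB)) (card (snd AB)))
        = (\<Sum>AB\<in>Adm n1 n2 L M. wt n1 n2 p (card (fst AB)) (card (snd AB)))"
    proof (rule sum.cong[OF refl])
      fix AB assume "AB \<in> Adm n1 n2 L M"
      then have "admf L M (card (fst AB)) (card (snd AB))"
        by (cases AB) (auto simp: Adm_def admf_def Suc_le_eq card_gt_0_iff intro: finite_subset)
      then show "F (card (fst AB)) (card (snd AB)) = wt n1 n2 p (card (fst AB)) (card (snd AB))"
        by (simp add: F_def)
    qed
    ultimately show ?thesis by simp
  qed
  also have "\<dots> = (\<Sum>A\<in>Pow {..<n1}. \<Sum>B\<in>Pow {..<n2}. F (card A) (card B))"
    by (simp add: sum.cartesian_product case_prod_beta)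
  also have "\<dots> = (\<Sum>A\<in>Pow {..<n1}. \<Sum>k\<le>n2. real (n2 choose k) * F (card A) k)"
    by (intro sum.cong refl) (simp add: sum_Pow_card[of "{..<n2}" "\<lambda>b. F _ b", simplified])
  also have "\<dots> = (\<Sum>j\<le>n1. real (n1 choose j) * (\<Sum>k\<le>n2. real (n2 choose k) * F j k))"
    using sum_Pow_card[of "{..<n1}" "\<lambda>a. \<Sum>k\<le>n2. real (n2 choose k) * F a k"] by simp
  also have "\<dots> = (\<Sum>j\<le>n1. \<Sum>k\<le>n2. real (n1 choose j) * real (n2 choose k) * F j k)"
    by (simp add: sum_distrib_left mult.assoc)
  also have "\<dots> \<le> (\<Sum>j\<le>n1. \<Sum>k\<le>n2. if admf L M j k then Bd else 0)"
  proof (intro sum_mono)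
    fix j k assume j: "j \<in> {..n1}" and k: "k \<in> {..n2}"
    show "real (n1 choose j) * real (n2 choose k) * F j k \<le> (if admf L M j k then Bd else 0)"
    proof (cases "admf L M j k")
      case True
      then have jk: "1 \<le> j" "real j \<le> L" "real k \<le> M * real j" by (auto simp: admf_def)
      have "real (n1 choose j) * real (n2 choose k) * F j k
          \<le> 4 * (p * real n2) / (d - 1 - ln d)^2 * exp (2 * p * real j * real k)"
        using term_bound[OF n1 n2 pdef d p1 n12 jk(1) _ _ ] j k jk(3) True
        by (simp add: F_def wt_def M_def mult.assoc)
      also have "\<dots> \<le> Bd"
      proof -
        have "real k \<le> M * L" using jk M0 by (meson mult_left_mono order_trans)
        then have "real j * real k \<le> L * (M * L)" using jk by (intro mult_mono) auto
        then have "2 * p * real j * real k \<le> 2 * p * L * (M * L)" using p0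
          by (simp add: mult.assoc)
        then show ?thesis unfolding Bd_def using p0 by (intro mult_left_mono) auto
      qed
      finally show ?thesis using True by simp
    qed (simp add: F_def)
  qed
  also have "\<dots> = real (card {jk\<in>{..n1} \<times> {..n2}. admf L M (fst jk) (snd jk)}) * Bd"
  proof -
    have "(\<Sum>j\<le>n1. \<Sum>k\<le>n2. if admf L M j k then Bd else 0)
        = (\<Sum>jk\<in>{..n1} \<times> {..n2}. if admf L M (fst jk) (snd jk) then Bd else 0)"
      by (simp add: sum.cartesian_product case_prod_beta)
    also have "\<dots> = (\<Sum>jk\<in>{jk\<in>{..n1} \<times> {..n2}. admf L M (fst jk) (snd jk)}. Bd)"
      by (rule sum.inter_filter[symmetric]) auto
    finally show ?thesis by simp
  qed
  also have "\<dots> \<le> L * (M * L + 1) * Bd"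
  proof (rule mult_right_mono)
    show "0 \<le> Bd" using p0 by (simp add: Bd_def)
    have "{jk\<in>{..n1} \<times> {..n2}. admf L M (fst jk) (snd jk)} \<subseteq> {1..nat \<lfloor>L\<rfloor>} \<times> {..nat \<lfloor>M * L\<rfloor>}"
    proof
      fix x assume "x \<in> {jk\<in>{..n1} \<times> {..n2}. admf L M (fst jk) (snd jk)}"
      then obtain j k where x: "x = (j, k)" and "admf L M j k" by (cases x) auto
      then have jk: "1 \<le> j" "real j \<le> L" "real k \<le> M * real j" by (auto simp: admf_def)
      have "real k \<le> M * L" using jk M0 by (meson mult_left_mono order_trans)
      then show "x \<in> {1..nat \<lfloor>L\<rfloor>} \<times> {..nat \<lfloor>M * L\<rfloor>}"
        using jk x by (auto simp: le_nat_floor)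
    qed
    then have "card {jk\<in>{..n1} \<times> {..n2}. admf L M (fst jk) (snd jk)} \<le> card ({1..nat \<lfloor>L\<rfloor>} \<times> {..nat \<lfloor>M * L\<rfloor>})"
      by (intro card_mono) auto
    also have "\<dots> = nat \<lfloor>L\<rfloor> * (nat \<lfloor>M * L\<rfloor> + 1)" by (simp add: card_cartesian_product)
    finally have "real (card {jk\<in>{..n1} \<times> {..n2}. admf L M (fst jk) (snd jk)}) \<le> real (nat \<lfloor>L\<rfloor>) * (real (nat \<lfloor>M * L\<rfloor>) + 1)"
      by (metis of_nat_add of_nat_le_iff of_nat_mult of_nat_1)
    also have "\<dots> \<le> L * (M * L + 1)"
      using L M0 by (intro mult_mono add_mono) auto
    finally show "real (card {jk\<in>{..n1} \<times> {..n2}. admf L M (fst jk) (snd jk)}) \<le> L * (M * L + 1)" .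
  qed
  finally show ?thesis by (simp add: M_def Bd_def)
qed

theorem lemma4p6:
  fixes n1 n2 :: "nat \<Rightarrow> nat" and lam d \<beta>0 :: real
  assumes n1_inf: "filterlim n1 at_top sequentially"
    and ratio: "\<And>k. real (n1 k) = lam * real (n2 k)"
    and lam: "0 < lam" "lam \<le> 1"
    and d: "d > 1"
    and beta0: "\<beta>0 > 0"
    and johansson: "\<exists>\<beta>1 > 0. (\<lambda>k. measure_pmf.prob
          (bip_random (n1 k) (n2 k) (d / sqrt (real (n1 k) * real (n2 k))))
          {G. johansson_event \<beta>0 \<beta>1 (n1 k) (n2 k) G}) \<longlonglongrightarrow> 1"
  shows "\<exists>f :: nat \<Rightarrow> real. f \<in> o(\<lambda>k. (ln (real (n1 k))) ^ 5) \<and>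
    (\<lambda>k. measure_pmf.prob
          (bip_random (n1 k) (n2 k) (d / sqrt (real (n1 k) * real (n2 k))))
          {G. real (num_sbu \<beta>0 (d / sqrt (real (n1 k) * real (n2 k))) (n1 k) (n2 k) G) \<le> f k})
      \<longlonglongrightarrow> 1"
proof -
  define f where "f k = ln (real (n1 k)) powr (9/2)" for k
  define al where "al = d / sqrt lam"
  define c where "c = d - 1 - ln d"
  define B where "B x = \<beta>0 * (ln x)^2 * (2*al*(\<beta>0*(ln x)^2) + 1) *
     (4*al/c^2 * exp (2*(al*lam/x)*(\<beta>0*(ln x)^2)*(2*al*(\<beta>0*(ln x)^2)))) / (ln x powr (9/2))" for x
  have al0: "al > 0" using d lam by (simp add: al_def)
  have c0: "c > 0" using c_pos[OF d] by (simp add: c_def)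
  have rn1: "filterlim (\<lambda>k. real (n1 k)) at_top sequentially"
    by (rule filterlim_compose[OF filterlim_real_sequentially n1_inf])
  have Blim: "(B \<longlongrightarrow> 0) at_top"
    unfolding B_def using beta0 al0 lam c0 by real_asymp
  have Blim': "(\<lambda>k. B (real (n1 k))) \<longlonglongrightarrow> 0"
    by (rule filterlim_compose[OF Blim rn1])
  have fo: "f \<in> o(\<lambda>k. (ln (real (n1 k))) ^ 5)"
  proof -
    have "(\<lambda>x::real. ln x powr (9/2)) \<in> o(\<lambda>x. ln x ^ 5)" by real_asymp
    from landau_o.small.compose[OF this rn1] show ?thesis unfolding f_def[abs_def] by simp
  qed
  have ev: "eventually (\<lambda>k. real (n1 k) \<ge> max 4 (al * lam)) sequentially"
    using rn1 unfolding filterlim_at_top by blast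
  have main: "eventually (\<lambda>k. 1 - B (real (n1 k)) \<le> measure_pmf.prob
          (bip_random (n1 k) (n2 k) (d / sqrt (real (n1 k) * real (n2 k))))
          {G. real (num_sbu \<beta>0 (d / sqrt (real (n1 k) * real (n2 k))) (n1 k) (n2 k) G) \<le> f k}) sequentially"
    using ev
  proof eventually_elim
    case (elim k)
    define m1 where "m1 = n1 k"
    define m2 where "m2 = n2 k"
    define x where "x = real m1"
    define p where "p = d / sqrt (real m1 * real m2)"
    define L where "L = \<beta>0 * (ln (real m1))\<^sup>2"
    define M where "M = measure_pmf (bip_random m1 m2 p)"
    have x3: "x \<ge> 4" and xal: "x \<ge> al * lam" using elim by (auto simp: x_def m1_def)
    have m2x: "real m2 = x / lam" using ratio[of k] lam by (simp add: x_def m1_def m2_def field_simps)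
    have m1: "m1 \<ge> 1" using x3 by (simp add: x_def)
    have "x * lam \<le> x" using lam x3 by (simp add: mult_left_le)
    then have "x \<le> x / lam" using lam by (simp add: le_divide_eq)
    then have xm2: "x \<le> real m2" using m2x by simp
    then have m2: "m2 \<ge> 1" using x3 by simp
    have n12: "real m1 \<le> real m2" using xm2 by (simp add: x_def)
    have sq: "sqrt (real m1 * real m2) = x / sqrt lam"
    proof -
      have "real m1 * real m2 = x * (x / lam)" using m2x by (simp add: x_def)
      also have "\<dots> = (x / sqrt lam)^2" using lam by (simp add: power_divide power2_eq_square)
      finally have e: "real m1 * real m2 = (x / sqrt lam)^2" .
      have "x / sqrt lam \<ge> 0" using x3 lam by simp
      then show ?thesis unfolding e real_sqrt_abs by (rule abs_of_nonneg)
    qed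
    have pval: "p = al * lam / x"
    proof -
      have sl: "sqrt lam * sqrt lam = lam" using lam by simp
      have "p = d * sqrt lam / x" unfolding p_def sq using lam x3 by (simp add: field_simps)
      also have "\<dots> = al * lam / x"
      proof -
        have "lam / sqrt lam = sqrt lam" using lam by (simp add: real_div_sqrt)
        then have "d / sqrt lam * lam = d * sqrt lam" by (metis times_divide_eq_left times_divide_eq_right mult.commute)
        then show ?thesis by (simp add: al_def)
      qed
      finally show ?thesis .
    qed
    have pn2: "p * real m2 = al"
      unfolding pval m2x using lam x3 by (simp add: field_simps)
    have e2: "2 * p * real m2 = 2 * al" using pn2 by (simp add: mult.assoc)
    have p0: "p > 0" using pval al0 lam x3 by simp
    have p1: "p \<le> 1" using pval xal x3 by (simp add: divide_le_eq)
    have L0: "L \<ge> 0" using beta0 by (simp add: L_def)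
    have lnx: "ln x > 1"
    proof -
      have "exp 1 < x" using x3 exp_le by linarith
      then have "ln (exp 1) < ln x" using x3 by (subst ln_less_cancel_iff) auto
      then show ?thesis by simp
    qed
    have f0: "f k > 0" using lnx by (simp add: f_def m1_def[symmetric] x_def[symmetric])
    define Y where "Y G = card {AB \<in> Adm m1 m2 L (2 * p * real m2). G \<in> Ev m1 m2 (fst AB) (snd AB)}" for G
    have sub: "UNIV - {G. real (num_sbu \<beta>0 p m1 m2 G) \<le> f k} \<subseteq> {G. f k \<le> real (Y G)}"
    proof
      fix G assume "G \<in> UNIV - {G. real (num_sbu \<beta>0 p m1 m2 G) \<le> f k}"
      moreover have "num_sbu \<beta>0 p m1 m2 G \<le> Y G" unfolding Y_def L_def by (rule num_sbu_le)
      ultimately show "G \<in> {G. f k \<le> real (Y G)}" by auto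
    qed
    have "measure M {G. f k \<le> real (Y G)}
        \<le> (\<Sum>AB\<in>Adm m1 m2 L (2 * p * real m2). measure M (Ev m1 m2 (fst AB) (snd AB))) / f k"
      unfolding Y_def M_def by (rule markov_count[OF finite_Adm f0])
    also have "\<dots> \<le> (L * (2 * p * real m2 * L + 1) * (4 * (p * real m2) / (d - 1 - ln d)^2
        * exp (2 * p * L * (2 * p * real m2 * L)))) / f k"
      unfolding M_def using f0
      by (intro divide_right_mono finite_bound[OF m1 m2 p_def d p1 n12 L0]) auto
    also have "\<dots> = B x"
      unfolding B_def f_def L_def e2 pn2 c_def[symmetric]
      by (simp add: m1_def[symmetric] x_def[symmetric] pval mult.assoc)
    finally have mk: "measure M {G. f k \<le> real (Y G)} \<le> B x" .
    have "measure M (UNIV - {G. real (num_sbu \<beta>0 p m1 m2 G) \<le> f k}) \<le> B x"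
    proof -
      have "measure M (UNIV - {G. real (num_sbu \<beta>0 p m1 m2 G) \<le> f k}) \<le> measure M {G. f k \<le> real (Y G)}"
        unfolding M_def by (rule measure_pmf.finite_measure_mono[OF sub]) simp
      then show ?thesis using mk by linarith
    qed
    then have "1 - measure M {G. real (num_sbu \<beta>0 p m1 m2 G) \<le> f k} \<le> B x"
    proof -
      have "measure M (space M - {G. real (num_sbu \<beta>0 p m1 m2 G) \<le> f k}) = 1 - measure M {G. real (num_sbu \<beta>0 p m1 m2 G) \<le> f k}"
        unfolding M_def by (rule measure_pmf.prob_compl) simp
      moreover have "space M = UNIV" by (simp add: M_def)
      ultimately show ?thesis using \<open>measure M (UNIV - {G. real (num_sbu \<beta>0 p m1 m2 G) \<le> f k}) \<le> B x\<close> by simp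
    qed
    then show ?case by (simp add: M_def p_def m1_def m2_def x_def)
  qed
  have lim1: "(\<lambda>k. 1 - B (real (n1 k))) \<longlonglongrightarrow> 1"
    using tendsto_diff[OF tendsto_const Blim', of 1] by simp
  have "(\<lambda>k. measure_pmf.prob
          (bip_random (n1 k) (n2 k) (d / sqrt (real (n1 k) * real (n2 k))))
          {G. real (num_sbu \<beta>0 (d / sqrt (real (n1 k) * real (n2 k))) (n1 k) (n2 k) G) \<le> f k})
      \<longlonglongrightarrow> 1"
    by (rule tendsto_sandwich[OF main _ lim1 tendsto_const]) (simp add: measure_pmf.prob_le_1)
  then show ?thesis using fo by blast
qed

end
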